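(* Let $n\geq 2$ be an integer and let $\mathcal{G}\in\mathbb{EFL}_{n}$ be such that every shared vertex of $\mathcal{G}$ belongs to exactly two defining $n$-cliques of $\mathcal{G}$. Denote the shared vertex common to $Q_i$ and $Q_j$ ($1\le i<j\le n$) by $(i,j)$. (i) If $n$ is even, then the map $c$ on the shared vertices defined by $c\big((i,j)\big)\equiv i+j \pmod{n-1}$ if $j<n$, and $c\big((i,j)\big)\equiv 2i \pmod{n-1}$ if $j=n$, with values in $\{1,\ldots,n-1\}$, is a proper $(n-1)$-colouring of the shared vertices of $\mathcal{G}$ (i.e. any two adjacent shared vertices receive different colours). (ii) If $n$ is odd, then $c\big((i,j)\big)\equiv i+j\pmod{n}$, with values in $\{1,\ldots,n\}$, is a proper $n$-colouring of the shared vertices of $\mathcal{G}$. (iii) $\chi(\mathcal{G})=n$.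
   Context: For a positive integer $n$, $\mathbb{EFL}_{n}$ denotes the class of (simple) graphs $G$ that are the union of $n$ cliques $Q_1,\ldots,Q_n$, each of order $n$ (the defining $n$-cliques), such that any two of them intersect in at most one vertex; i.e. $V(G)=\bigcup V(Q_i)$ and $E(G)=\bigcup E(Q_i)$. A vertex belonging to more than one defining $n$-clique is called shared. If $Q_i$ and $Q_j$ ($i<j$) have a common vertex, it is denoted by the ordered pair $(i,j)$. When reducing modulo $t$, the complete residue system used is $\{1,\ldots,t\}$. $\chi$ denotes the chromatic number. *)

theory Defs
  imports Main
begin

text \<open>A graph in EFL_n is given by its n defining n-cliques Q 1, ..., Q n
  (indexed by 1..n); vertices are their union, edges are pairs of distinct
  vertices lying in a common defining clique.\<close>

definition efl :: "nat \<Rightarrow> (nat \<Rightarrow> 'a set) \<Rightarrow> bool" where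
  "efl n Q \<longleftrightarrow> (\<forall>i\<in>{1..n}. finite (Q i) \<and> card (Q i) = n) \<and>
     (\<forall>i\<in>{1..n}. \<forall>j\<in>{1..n}. i \<noteq> j \<longrightarrow> card (Q i \<inter> Q j) \<le> 1)"

definition efl_verts :: "nat \<Rightarrow> (nat \<Rightarrow> 'a set) \<Rightarrow> 'a set" where
  "efl_verts n Q = (\<Union>i\<in>{1..n}. Q i)"

definition efl_adj :: "nat \<Rightarrow> (nat \<Rightarrow> 'a set) \<Rightarrow> 'a \<Rightarrow> 'a \<Rightarrow> bool" where
  "efl_adj n Q u v \<longleftrightarrow> u \<noteq> v \<and> (\<exists>i\<in>{1..n}. u \<in> Q i \<and> v \<in> Q i)"

definition cliques_of :: "nat \<Rightarrow> (nat \<Rightarrow> 'a set) \<Rightarrow> 'a \<Rightarrow> nat set" where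
  "cliques_of n Q v = {i\<in>{1..n}. v \<in> Q i}"

definition shared :: "nat \<Rightarrow> (nat \<Rightarrow> 'a set) \<Rightarrow> 'a \<Rightarrow> bool" where
  "shared n Q v \<longleftrightarrow> card (cliques_of n Q v) \<ge> 2"

text \<open>For a shared vertex lying in exactly two cliques, its pair (i,j), i<j.\<close>
definition pair_i :: "nat \<Rightarrow> (nat \<Rightarrow> 'a set) \<Rightarrow> 'a \<Rightarrow> nat" where
  "pair_i n Q v = Min (cliques_of n Q v)"
definition pair_j :: "nat \<Rightarrow> (nat \<Rightarrow> 'a set) \<Rightarrow> 'a \<Rightarrow> nat" where
  "pair_j n Q v = Max (cliques_of n Q v)"

definition resid :: "nat \<Rightarrow> nat \<Rightarrow> nat" where
  "resid t x = (if x mod t = 0 then t else x mod t)"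

definition col_even :: "nat \<Rightarrow> (nat \<Rightarrow> 'a set) \<Rightarrow> 'a \<Rightarrow> nat" where
  "col_even n Q v = (if pair_j n Q v < n then resid (n - 1) (pair_i n Q v + pair_j n Q v)
                     else resid (n - 1) (2 * pair_i n Q v))"

definition col_odd :: "nat \<Rightarrow> (nat \<Rightarrow> 'a set) \<Rightarrow> 'a \<Rightarrow> nat" where
  "col_odd n Q v = resid n (pair_i n Q v + pair_j n Q v)"

definition proper_colouring :: "'a set \<Rightarrow> ('a \<Rightarrow> 'a \<Rightarrow> bool) \<Rightarrow> nat \<Rightarrow> ('a \<Rightarrow> nat) \<Rightarrow> bool" where
  "proper_colouring V adj k f \<longleftrightarrow> (\<forall>v\<in>V. f v < k) \<and>
     (\<forall>u\<in>V. \<forall>v\<in>V. adj u v \<longrightarrow> f u \<noteq> f v)"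

definition chromatic_number :: "'a set \<Rightarrow> ('a \<Rightarrow> 'a \<Rightarrow> bool) \<Rightarrow> nat" where
  "chromatic_number V adj = (LEAST k. \<exists>f. proper_colouring V adj k f)"

end

theory Submission imports Defs begin

lemma resid_eq: "t > 0 \<Longrightarrow> resid t x = resid t y \<longleftrightarrow> x mod t = y mod t"
  unfolding resid_def by (metis mod_less_divisor neq0_conv less_irrefl)

lemma resid_range: "t > 0 \<Longrightarrow> resid t x \<in> {1..t}"
  unfolding resid_def by (auto simp: less_imp_le)

lemma mod_inj_nat:
  fixes x y m :: nat
  assumes "x \<in> {1..m}" "y \<in> {1..m}" "x mod m = y mod m"
  shows "x = y"
proof -
  have "int x mod int m = int y mod int m" using assms(3) by (metis of_nat_mod)
  hence "int m dvd int x - int y" by (simp add: mod_eq_dvd_iff)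
  moreover have "\<bar>int x - int y\<bar> < int m" using assms(1,2) by auto
  ultimately have "int x - int y = 0"
    by (metis abs_of_nat dvd_imp_le_int not_less)
  thus ?thesis by simp
qed

lemma mod2_inj_nat:
  fixes x y m :: nat
  assumes "odd m" "x \<in> {1..m}" "y \<in> {1..m}" "(2*x) mod m = (2*y) mod m"
  shows "x = y"
proof -
  have "int (2*x) mod int m = int (2*y) mod int m" using assms(4) by (metis of_nat_mod)
  hence "int m dvd 2 * (int x - int y)" by (simp add: mod_eq_dvd_iff algebra_simps)
  moreover have "coprime (int m) 2" using assms(1) by (simp add: coprime_commute)
  ultimately have "int m dvd int x - int y" using coprime_dvd_mult_right_iff by blast
  moreover have "\<bar>int x - int y\<bar> < int m" using assms(2,3) by auto
  ultimately have "int x - int y = 0"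
    by (metis abs_of_nat dvd_imp_le_int not_less)
  thus ?thesis by simp
qed

lemma cl_fin: "finite (cliques_of n Q v)" unfolding cliques_of_def by auto

lemma shared_rep:
  assumes sh: "shared n Q v" and two: "card (cliques_of n Q v) = 2" and k: "k \<in> cliques_of n Q v"
  shows "\<exists>a. a \<in> {1..n} \<and> a \<noteq> k \<and> cliques_of n Q v = {k,a}"
proof -
  obtain x y where xy: "x \<noteq> y" "cliques_of n Q v = {x,y}" using two card_2_iff by metis
  have sub: "cliques_of n Q v \<subseteq> {1..n}" unfolding cliques_of_def by auto
  show ?thesis
  proof (cases "k = x")
    case True thus ?thesis using xy sub by auto
  next
    case False hence "k = y" using k xy by auto
    thus ?thesis using xy sub by auto
  qed
qed

lemma pair_sum:
  assumes "cliques_of n Q v = {k,a}" "a \<noteq> k"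
  shows "pair_i n Q v + pair_j n Q v = k + a"
    and "pair_j n Q v < n \<longleftrightarrow> (max k a < n)"
    and "pair_i n Q v = min k a"
proof -
  have i: "pair_i n Q v = min k a" by (simp add: pair_i_def assms(1))
  have j: "pair_j n Q v = max k a" by (simp add: pair_j_def assms(1))
  show "pair_i n Q v + pair_j n Q v = k + a" "pair_j n Q v < n \<longleftrightarrow> (max k a < n)"
    "pair_i n Q v = min k a" using i j by (auto simp: min_def max_def)
qed

lemma nonshared_rep:
  assumes "\<not> shared n Q v" "k \<in> {1..n}" "v \<in> Q k"
  shows "cliques_of n Q v = {k}"
proof -
  have "k \<in> cliques_of n Q v" using assms unfolding cliques_of_def by auto
  moreover have "card (cliques_of n Q v) \<le> 1" using assms(1) unfolding shared_def by auto
  moreover have "cliques_of n Q v \<subseteq> {k}"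
  proof
    fix x assume x: "x \<in> cliques_of n Q v"
    show "x \<in> {k}"
    proof (rule ccontr)
      assume "x \<notin> {k}"
      hence "card {k,x} = 2" by auto
      moreover have "card {k,x} \<le> card (cliques_of n Q v)"
        using x \<open>k \<in> cliques_of n Q v\<close> cl_fin by (intro card_mono) auto
      ultimately show False using \<open>card (cliques_of n Q v) \<le> 1\<close> by simp
    qed
  qed
  ultimately show ?thesis by blast
qed

lemma two_shared_same:
  assumes efl: "efl n Q" and k: "k \<in> {1..n}" and a: "a \<in> {1..n}" "a \<noteq> k"
    and "u \<in> Q k" "v \<in> Q k" "u \<in> Q a" "v \<in> Q a" "u \<noteq> v"
  shows False
proof -
  have "finite (Q k)" using efl k unfolding efl_def by auto
  hence "card (Q k \<inter> Q a) \<le> 1" using efl k a unfolding efl_def by auto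
  moreover have "{u,v} \<subseteq> Q k \<inter> Q a" using assms by auto
  hence "card {u,v} \<le> card (Q k \<inter> Q a)" using \<open>finite (Q k)\<close> by (intro card_mono) auto
  ultimately show False using assms(9) by simp
qed

lemma adj_shared:
  assumes efl: "efl n Q" and tw: "\<forall>v\<in>efl_verts n Q. shared n Q v \<longrightarrow> card (cliques_of n Q v) = 2"
    and uV: "u \<in> efl_verts n Q" and vV: "v \<in> efl_verts n Q"
    and su: "shared n Q u" and sv: "shared n Q v" and k: "k \<in> {1..n}" "u \<in> Q k" "v \<in> Q k" and uv: "u \<noteq> v"
  shows "\<exists>a b. a \<in> {1..n} \<and> b \<in> {1..n} \<and> a \<noteq> k \<and> b \<noteq> k \<and> a \<noteq> b \<and>
     cliques_of n Q u = {k,a} \<and> cliques_of n Q v = {k,b}"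
proof -
  have ku: "k \<in> cliques_of n Q u" "k \<in> cliques_of n Q v" using k unfolding cliques_of_def by auto
  obtain a where a: "a \<in> {1..n}" "a \<noteq> k" "cliques_of n Q u = {k,a}"
    using shared_rep[OF su _ ku(1)] tw uV su by blast
  obtain b where b: "b \<in> {1..n}" "b \<noteq> k" "cliques_of n Q v = {k,b}"
    using shared_rep[OF sv _ ku(2)] tw vV sv by blast
  have "a \<noteq> b"
  proof
    assume "a = b"
    hence "u \<in> Q a" "v \<in> Q a" using a b unfolding cliques_of_def by blast+
    thus False using two_shared_same[OF efl k(1) a(1) a(2) k(2) k(3)] uv by blast
  qed
  thus ?thesis using a b by blast
qed

lemma dvd_inj_nat:
  fixes x y m :: nat
  assumes "x \<in> {1..m}" "y \<in> {1..m}" "int m dvd int x - int y"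
  shows "x = y"
proof -
  have "\<bar>int x - int y\<bar> < int m" using assms(1,2) by auto
  hence "int x - int y = 0" using assms(3)
    by (metis abs_of_nat dvd_imp_le_int not_less)
  thus ?thesis by simp
qed

lemma mod_dvd_int: "(x::nat) mod m = y mod m \<Longrightarrow> int m dvd int x - int y"
  by (metis of_nat_mod mod_eq_dvd_iff)

lemma odd_key:
  fixes n k a b :: nat
  assumes "a \<in> {1..n}" "b \<in> {1..n}" "a \<noteq> b"
  shows "(k + a) mod n \<noteq> (k + b) mod n"
proof
  assume "(k + a) mod n = (k + b) mod n"
  hence "int n dvd int (k+a) - int (k+b)" by (rule mod_dvd_int)
  hence "int n dvd int a - int b" by simp
  thus False using dvd_inj_nat assms by blast
qed

definition Ek :: "nat \<Rightarrow> nat \<Rightarrow> nat \<Rightarrow> nat" where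
  "Ek n k x = (if k = n \<or> x = n then resid (n-1) (2*(k+x-n)) else resid (n-1) (k+x))"

lemma even_key:
  fixes n k a b :: nat
  assumes "even n" "n \<ge> 2" "k \<in> {1..n}" "a \<in> {1..n}" "b \<in> {1..n}" "a \<noteq> k" "b \<noteq> k" "a \<noteq> b"
  shows "Ek n k a \<noteq> Ek n k b"
proof
  assume E: "Ek n k a = Ek n k b"
  have m: "n - 1 > 0" "odd (n-1)" using assms(1,2) by auto
  show False
  proof (cases "k = n")
    case True
    hence "(2*a) mod (n-1) = (2*b) mod (n-1)" using E assms resid_eq[OF m(1)] by (simp add: Ek_def)
    moreover have "a \<in> {1..n-1}" "b \<in> {1..n-1}" using assms True by auto
    ultimately show False using mod2_inj_nat[OF m(2)] assms(8) by blast
  next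
    case kn: False
    have k1: "k \<in> {1..n-1}" using assms kn by auto
    show False
    proof (cases "a = n")
      case True
      hence bn: "b \<noteq> n" using assms by auto
      hence "(2*k) mod (n-1) = (k+b) mod (n-1)" using E True kn resid_eq[OF m(1)] by (simp add: Ek_def)
      hence "int (n-1) dvd int (2*k) - int (k+b)" by (rule mod_dvd_int)
      hence d: "int (n-1) dvd int k - int b" by simp
      have b1: "b \<in> {1..n-1}" using assms bn by auto
      from dvd_inj_nat[OF k1 b1 d] show False using assms by auto
    next
      case an: False
      show False
      proof (cases "b = n")
        case True
        hence "(k+a) mod (n-1) = (2*k) mod (n-1)" using E an kn resid_eq[OF m(1)] by (simp add: Ek_def)
        hence "int (n-1) dvd int (k+a) - int (2*k)" by (rule mod_dvd_int)
        hence "int (n-1) dvd int a - int k" by simp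
        thus False using dvd_inj_nat[OF _ k1] assms an by auto
      next
        case bn: False
        hence "(k+a) mod (n-1) = (k+b) mod (n-1)" using E an kn resid_eq[OF m(1)] by (simp add: Ek_def)
        hence "int (n-1) dvd int (k+a) - int (k+b)" by (rule mod_dvd_int)
        hence d: "int (n-1) dvd int a - int b" by simp
        have a1: "a \<in> {1..n-1}" "b \<in> {1..n-1}" using assms an bn by auto
        from dvd_inj_nat[OF a1 d] show False using assms by auto
      qed
    qed
  qed
qed

lemma col_even_Ek:
  assumes "cliques_of n Q v = {k,a}" "a \<noteq> k" "k \<le> n" "a \<le> n"
  shows "col_even n Q v = Ek n k a"
proof -
  note p = pair_sum[OF assms(1,2)]
  show ?thesis
  proof (cases "k = n \<or> a = n")
    case True
    hence "\<not> max k a < n" by auto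
    moreover have "2 * min k a = 2*(k+a-n)" using True assms by auto
    ultimately show ?thesis using True p unfolding col_even_def Ek_def by (simp only: if_False if_True)
  next
    case False
    hence "max k a < n" using assms by auto
    thus ?thesis using False p unfolding col_even_def Ek_def by simp
  qed
qed

theorem theorem2p4:
  fixes n :: nat and Q :: "nat \<Rightarrow> 'a set"
  assumes "n \<ge> 2"
    and "efl n Q"
    and two: "\<forall>v\<in>efl_verts n Q. shared n Q v \<longrightarrow> card (cliques_of n Q v) = 2"
  shows "(even n \<longrightarrow>
            (\<forall>v\<in>efl_verts n Q. shared n Q v \<longrightarrow> col_even n Q v \<in> {1..n-1}) \<and>
            (\<forall>u\<in>efl_verts n Q. \<forall>v\<in>efl_verts n Q. shared n Q u \<and> shared n Q v \<and>
               efl_adj n Q u v \<longrightarrow> col_even n Q u \<noteq> col_even n Q v))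
       \<and> (odd n \<longrightarrow>
            (\<forall>v\<in>efl_verts n Q. shared n Q v \<longrightarrow> col_odd n Q v \<in> {1..n}) \<and>
            (\<forall>u\<in>efl_verts n Q. \<forall>v\<in>efl_verts n Q. shared n Q u \<and> shared n Q v \<and>
               efl_adj n Q u v \<longrightarrow> col_odd n Q u \<noteq> col_odd n Q v))
       \<and> chromatic_number (efl_verts n Q) (efl_adj n Q) = n"
proof -
  note efl = assms(2)
  define V where "V = efl_verts n Q"
  have n0: "n > 0" "n - 1 > 0" using assms(1) by auto
  have QV: "\<And>k. k \<in> {1..n} \<Longrightarrow> Q k \<subseteq> V" unfolding V_def efl_verts_def by auto
  have finQ: "\<And>k. k \<in> {1..n} \<Longrightarrow> finite (Q k) \<and> card (Q k) = n" using efl unfolding efl_def by auto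
  have sumkey: "(pair_i n Q u + pair_j n Q u) mod n \<noteq> (pair_i n Q v + pair_j n Q v) mod n"
    and evkey: "even n \<Longrightarrow> col_even n Q u \<noteq> col_even n Q v"
    if u: "u \<in> V" and v: "v \<in> V" and su: "shared n Q u" and sv: "shared n Q v"
      and k: "k \<in> {1..n}" "u \<in> Q k" "v \<in> Q k" and uv: "u \<noteq> v" for u v k
  proof -
    obtain a b where ab: "a \<in> {1..n}" "b \<in> {1..n}" "a \<noteq> k" "b \<noteq> k" "a \<noteq> b"
      "cliques_of n Q u = {k,a}" "cliques_of n Q v = {k,b}"
      using adj_shared[OF efl two _ _ su sv k uv] u v unfolding V_def by blast
    show "(pair_i n Q u + pair_j n Q u) mod n \<noteq> (pair_i n Q v + pair_j n Q v) mod n"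
      using pair_sum(1)[OF ab(6) ab(3)] pair_sum(1)[OF ab(7) ab(4)] odd_key[OF ab(1,2,5)] by simp
    show "even n \<Longrightarrow> col_even n Q u \<noteq> col_even n Q v"
      using col_even_Ek[OF ab(6) ab(3)] col_even_Ek[OF ab(7) ab(4)] even_key[OF _ assms(1) k(1) ab(1-5)]
        k(1) ab(1,2) by auto
  qed
  have adjE: "\<exists>k\<in>{1..n}. u \<in> Q k \<and> v \<in> Q k" "u \<noteq> v" if "efl_adj n Q u v" for u v
    using that unfolding efl_adj_def by auto
  have P1: "even n \<longrightarrow>
            (\<forall>v\<in>efl_verts n Q. shared n Q v \<longrightarrow> col_even n Q v \<in> {1..n-1}) \<and>
            (\<forall>u\<in>efl_verts n Q. \<forall>v\<in>efl_verts n Q. shared n Q u \<and> shared n Q v \<and>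
               efl_adj n Q u v \<longrightarrow> col_even n Q u \<noteq> col_even n Q v)"
    using resid_range[OF n0(2)] evkey adjE unfolding V_def col_even_def by metis
  have P2: "odd n \<longrightarrow>
            (\<forall>v\<in>efl_verts n Q. shared n Q v \<longrightarrow> col_odd n Q v \<in> {1..n}) \<and>
            (\<forall>u\<in>efl_verts n Q. \<forall>v\<in>efl_verts n Q. shared n Q u \<and> shared n Q v \<and>
               efl_adj n Q u v \<longrightarrow> col_odd n Q u \<noteq> col_odd n Q v)"
    using resid_range[OF n0(1)] resid_eq[OF n0(1)] sumkey adjE unfolding V_def col_odd_def by metis
  define c where "c v = (pair_i n Q v + pair_j n Q v) mod n" for v
  define S where "S k = {v \<in> Q k. shared n Q v}" for k
  define N where "N k = {v \<in> Q k. \<not> shared n Q v}" for k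
  define R where "R k = {0..<n} - c ` S k" for k
  have "\<exists>g. bij_betw g (N k) (R k)" if k: "k \<in> {1..n}" for k
  proof -
    have fin: "finite (Q k)" "card (Q k) = n" using finQ k by auto
    have inj: "inj_on c (S k)"
      unfolding inj_on_def S_def c_def using sumkey QV[OF k] k by blast
    have "c ` S k \<subseteq> {0..<n}" unfolding c_def using n0 by auto
    hence cR: "card (R k) = n - card (S k)" unfolding R_def
      using card_Diff_subset[of "c ` S k" "{0..<n}"] card_image[OF inj] fin
      by (metis S_def card_atLeastLessThan diff_zero finite_Diff2 finite_subset mem_Collect_eq subsetI
          finite_atLeastLessThan)
    have "Q k = S k \<union> N k" "S k \<inter> N k = {}" unfolding S_def N_def by auto
    hence "card (N k) = n - card (S k)" using fin
      by (metis card_Un_disjoint diff_add_inverse finite_Un)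
    moreover have "finite (N k)" "finite (R k)" using fin unfolding N_def R_def by auto
    ultimately show ?thesis using cR by (metis finite_same_card_bij)
  qed
  then obtain G where G: "\<And>k. k \<in> {1..n} \<Longrightarrow> bij_betw (G k) (N k) (R k)" by metis
  define f where "f v = (if shared n Q v then c v else G (Min (cliques_of n Q v)) v)" for v
  have ns: "f v = G k v" "f v \<in> R k" "v \<in> N k"
    if "\<not> shared n Q v" "k \<in> {1..n}" "v \<in> Q k" for v k
  proof -
    have "cliques_of n Q v = {k}" using nonshared_rep that by metis
    thus "f v = G k v" using that unfolding f_def by simp
    show "v \<in> N k" using that unfolding N_def by auto
    thus "f v \<in> R k" using G[OF that(2)] \<open>f v = G k v\<close> bij_betwE by metis
  qed
  have inV: "\<exists>k\<in>{1..n}. v \<in> Q k" if "v \<in> V" for v using that unfolding V_def efl_verts_def by auto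
  have proper: "proper_colouring V (efl_adj n Q) n f"
    unfolding proper_colouring_def
  proof (intro conjI ballI impI)
    fix v assume v: "v \<in> V"
    show "f v < n"
    proof (cases "shared n Q v")
      case True thus ?thesis using n0 unfolding f_def c_def by simp
    next
      case False
      then obtain k where "k \<in> {1..n}" "v \<in> Q k" using inV v by blast
      thus ?thesis using ns[OF False] unfolding R_def by auto
    qed
  next
    fix u v assume u: "u \<in> V" and v: "v \<in> V" and ad: "efl_adj n Q u v"
    obtain k where k: "k \<in> {1..n}" "u \<in> Q k" "v \<in> Q k" and uv: "u \<noteq> v" using adjE[OF ad] by blast
    show "f u \<noteq> f v"
    proof (cases "shared n Q u")
      case su: True
      show ?thesis
      proof (cases "shared n Q v")
        case True thus ?thesis using sumkey[OF u v su True k uv] su unfolding f_def c_def by simp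
      next
        case False
        have "f u \<in> c ` S k" using su k unfolding f_def S_def by auto
        thus ?thesis using ns(2)[OF False k(1,3)] unfolding R_def by auto
      qed
    next
      case su: False
      show ?thesis
      proof (cases "shared n Q v")
        case True
        have "f v \<in> c ` S k" using True k unfolding f_def S_def by auto
        thus ?thesis using ns(2)[OF su k(1,2)] unfolding R_def by auto
      next
        case False
        have "inj_on (G k) (N k)" using G[OF k(1)] bij_betw_def by blast
        thus ?thesis using ns[OF su k(1,2)] ns[OF False k(1,3)] uv unfolding inj_on_def by metis
      qed
    qed
  qed
  have lower: "n \<le> m" if "proper_colouring V (efl_adj n Q) m g" for m g
  proof -
    have one: "1 \<in> {1..n}" using n0 by auto
    have "inj_on g (Q 1)" unfolding inj_on_def
      using that QV[OF one] one unfolding proper_colouring_def efl_adj_def by blast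
    moreover have "g ` Q 1 \<subseteq> {0..<m}" using that QV[OF one] unfolding proper_colouring_def by auto
    ultimately have "card (Q 1) \<le> card {0..<m}" using card_inj_on_le by blast
    thus ?thesis using finQ[OF one] by simp
  qed
  have P3: "chromatic_number V (efl_adj n Q) = n"
    unfolding chromatic_number_def
    by (rule Least_equality) (use proper lower in auto)
  show ?thesis using P1 P2 P3 unfolding V_def by blast
qed

end
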